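(* Let $a^+$ denote multiplication by $x$ and $a=\frac{d}{dx}$ (so $[a,a^+]=1$), and let $W_{1,\infty}$ be the algebra of operators generated by $a^+$, $(a^+)^{-1}$ and $a$, graded by $\mathrm{weight}(a^+)=1$, $\mathrm{weight}((a^+)^{-1})=\mathrm{weight}(a)=-1$. Let $e\ge 0$ be an integer and let $$\Omega=\sum_{w}\alpha_w\, w$$ be a finite linear combination of words $w$ in the letters $a^+,(a^+)^{-1},a$, each containing exactly one occurrence of $a$ and each of weight $e$. Define the coefficients $S_\Omega(n,k)$ by the normal ordering $$\mathcal{N}(\Omega^n)=(a^+)^{ne}\sum_{k\ge 0}S_\Omega(n,k)\,(a^+)^k a^k\qquad(n\ge 0),$$ and let $U_\lambda=e^{\lambda\Omega}=\sum_{n\ge0}\frac{\lambda^n}{n!}\Omega^n$. Then for formal power series $g(x),\phi(x)$, the following are equivalent: (i) $\displaystyle\sum_{n,k\ge 0}S_\Omega(n,k)\frac{x^n}{n!}y^k=g(x)e^{y\phi(x)}$; (ii) for all $f$, $\;U_\lambda[f](x)=g(\lambda x^e)\,f\big(x(1+\phi(\lambda x^e))\big)$.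
   Context: $\mathcal{N}(\cdot)$ denotes the normally ordered form of an operator, i.e. its expression as a linear combination of terms with all powers of $a^+$ (and $(a^+)^{-1}$) to the left of all powers of $a$, obtained using $aa^+=a^+a+1$. Both sides of (ii) are understood as formal power series in $\lambda$, with $f\big(x(1+\phi(\lambda x^e))\big)$ understood via its Taylor expansion $\sum_k \frac{f^{(k)}(x)}{k!}\big(x\phi(\lambda x^e)\big)^k$. *)

theory Defs
  imports "HOL-Computational_Algebra.Formal_Laurent_Series"
begin

(* Letters: Cr = a^+ (multiplication by x), CrInv = (a^+)^{-1}, An = a = d/dx *)
datatype letter = Cr | CrInv | An

definition weight :: "letter list \<Rightarrow> int" where
  "weight w = int (length (filter (\<lambda>l. l = Cr) w))
              - int (length (filter (\<lambda>l. l = CrInv) w))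
              - int (length (filter (\<lambda>l. l = An) w))"

definition num_An :: "letter list \<Rightarrow> nat" where
  "num_An w = length (filter (\<lambda>l. l = An) w)"

(* An element of W_{1,oo} given as a finite linear combination of words:
   a list of (coefficient, word) pairs standing for  \<Sum> \<alpha>_w w. *)
type_synonym 'a lincomb = "('a \<times> letter list) list"

(* ---------- Normal ordering ----------
   A normally ordered expression is a finite sum of terms c (a^+)^m a^k  (m :: int, k :: nat),
   represented as a list of ((m,k), c). *)
type_synonym 'a nf = "((int \<times> nat) \<times> 'a) list"

definition ffact_int :: "int \<Rightarrow> nat \<Rightarrow> 'a::comm_ring_1" where
  "ffact_int p j = (\<Prod>i<j. of_int (p - int i))"

(* (a^+)^m a^k (a^+)^p a^l = \<Sum>_j  C(k,j) p^{(j)} (a^+)^{m+p-j} a^{k+l-j},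
   the rule obtained by repeated use of a a^+ = a^+ a + 1 (and its consequence for (a^+)^{-1}) *)
definition nf_mult :: "'a::comm_ring_1 nf \<Rightarrow> 'a nf \<Rightarrow> 'a nf" where
  "nf_mult L M = concat (map (\<lambda>((m,k),c). concat (map (\<lambda>((p,l),d).
      map (\<lambda>j. ((m + p - int j, k + l - j), c * d * of_nat (k choose j) * ffact_int p j)) [0..<Suc k])
     M)) L)"

definition nf_one :: "'a::comm_ring_1 nf" where
  "nf_one = [((0,0),1)]"

fun letter_nf :: "letter \<Rightarrow> 'a::comm_ring_1 nf" where
  "letter_nf Cr = [((1,0),1)]"
| "letter_nf CrInv = [((-1,0),1)]"
| "letter_nf An = [((0,1),1)]"

definition word_nf :: "letter list \<Rightarrow> 'a::comm_ring_1 nf" where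
  "word_nf w = foldr nf_mult (map letter_nf w) nf_one"

definition lincomb_nf :: "'a::comm_ring_1 lincomb \<Rightarrow> 'a nf" where
  "lincomb_nf \<Omega> = concat (map (\<lambda>(\<alpha>,w). map (\<lambda>(mk,c). (mk, \<alpha> * c)) (word_nf w)) \<Omega>)"

definition nf_pow :: "'a::comm_ring_1 nf \<Rightarrow> nat \<Rightarrow> 'a nf" where
  "nf_pow L n = (nf_mult L ^^ n) nf_one"

definition nf_coeff :: "'a::comm_ring_1 nf \<Rightarrow> int \<Rightarrow> nat \<Rightarrow> 'a" where
  "nf_coeff L m k = sum_list (map snd (filter (\<lambda>(mk,c). mk = (m,k)) L))"

(* S_\<Omega>(n,k): N(\<Omega>^n) = (a^+)^{ne} \<Sum>_k S_\<Omega>(n,k) (a^+)^k a^k *)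
definition S_coeff :: "'a::comm_ring_1 lincomb \<Rightarrow> nat \<Rightarrow> nat \<Rightarrow> nat \<Rightarrow> 'a" where
  "S_coeff \<Omega> e n k = nf_coeff (nf_pow (lincomb_nf \<Omega>) n) (int (n * e + k)) k"

(* ---------- Generating functions (i) ----------
   Bivariate series in x (inner) and y (outer): an element of 'a fps fps whose
   y^k-coefficient is a power series in x. *)
definition S_egf :: "'a::field_char_0 lincomb \<Rightarrow> nat \<Rightarrow> 'a fps fps" where
  "S_egf \<Omega> e = Abs_fps (\<lambda>k. Abs_fps (\<lambda>n. S_coeff \<Omega> e n k / fact n))"

definition exp_y :: "'a::field_char_0 fps \<Rightarrow> 'a fps fps" where
  "exp_y \<phi> = Abs_fps (\<lambda>k. fps_const (inverse (fact k)) * \<phi> ^ k)"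

fun letter_op :: "letter \<Rightarrow> 'a::field_char_0 fls \<Rightarrow> 'a fls" where
  "letter_op Cr f = fls_X * f"
| "letter_op CrInv f = fls_X_inv * f"
| "letter_op An f = fls_deriv f"

definition word_op :: "letter list \<Rightarrow> 'a::field_char_0 fls \<Rightarrow> 'a fls" where
  "word_op w = foldr (\<lambda>l F. letter_op l \<circ> F) w id"

definition lincomb_op :: "'a::field_char_0 lincomb \<Rightarrow> 'a fls \<Rightarrow> 'a fls" where
  "lincomb_op \<Omega> f = sum_list (map (\<lambda>(\<alpha>,w). fls_const \<alpha> * word_op w f) \<Omega>)"

definition U_op :: "'a::field_char_0 lincomb \<Rightarrow> 'a fls \<Rightarrow> 'a fls fps" where
  "U_op \<Omega> f = Abs_fps (\<lambda>n. fls_const (inverse (fact n)) * (lincomb_op \<Omega> ^^ n) f)"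

(* h(\<lambda> x^e) as a power series in \<lambda> *)
definition subst_lam :: "'a::field_char_0 fps \<Rightarrow> nat \<Rightarrow> 'a fls fps" where
  "subst_lam h e = Abs_fps (\<lambda>m. fls_const (h $ m) * fls_X ^ (m * e))"

(* f(x(1+\<phi>(\<lambda> x^e))) := \<Sum>_k f^{(k)}(x)/k! (x \<phi>(\<lambda> x^e))^k, as a power series in \<lambda>.
   When \<phi>(0) = 0 the k-th summand is O(\<lambda>^k), so the \<lambda>^n-coefficient is the finite sum over k \<le> n. *)
definition taylor_comp :: "'a::field_char_0 fls \<Rightarrow> 'a fps \<Rightarrow> nat \<Rightarrow> 'a fls fps" where
  "taylor_comp f \<phi> e = Abs_fps (\<lambda>n. \<Sum>k\<le>n.
      fls_const (inverse (fact k)) * (fls_deriv ^^ k) f * (fps_const fls_X * subst_lam \<phi> e) ^ k $ n)"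

end

theory Submission
  imports Defs
begin

unbundle fps_syntax

lemma Suc_choose': "Suc n choose k = (n choose k) + (if k = 0 then 0 else (n choose (k-1)))"
  by (cases k) simp_all

lemma sum_Suc_reindex':
  fixes f :: "nat \<Rightarrow> 'a::ab_group_add"
  shows "sum f {0..n} = f 0 - f (Suc n) + sum (\<lambda>i. f (Suc i)) {0..n}"
  by (induct n) auto

lemma fls_deriv_sum': "fls_deriv (\<Sum>i\<in>A. F i) = (\<Sum>i\<in>A. fls_deriv (F i))"
  by (rule fls_deriv_sum)

lemma fls_leibniz:
  fixes f g :: "'a::field_char_0 fls"
  shows "(fls_deriv ^^ n) (f * g) =
     (\<Sum>i = 0..n. of_nat (n choose i) * (fls_deriv ^^ i) f * (fls_deriv ^^ (n-i)) g)"
proof (induction n)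
  case 0 then show ?case by simp
next
  case (Suc n)
  have "(fls_deriv ^^ Suc n) (f * g) = fls_deriv ((fls_deriv ^^ n) (f * g))" by simp
  also have "\<dots> = (\<Sum>i = 0..n. of_nat (n choose i) * ((fls_deriv ^^ i) f * fls_deriv ((fls_deriv ^^ (n-i)) g)
        + fls_deriv ((fls_deriv ^^ i) f) * (fls_deriv ^^ (n-i)) g))"
    unfolding Suc fls_deriv_sum by (simp add: algebra_simps fls_deriv_mult)
  also have "\<dots> = (\<Sum>i = 0..Suc n. of_nat (Suc n choose i) * (fls_deriv ^^ i) f * (fls_deriv ^^ (Suc n-i)) g)"
    apply (simp add: Suc_choose' algebra_simps sum.distrib)
    apply (subst (4) sum_Suc_reindex')
    apply (auto simp: algebra_simps Suc_diff_le intro: sum.cong)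
    done
  finally show ?case .
qed

definition XI :: "int \<Rightarrow> 'a::field_char_0 fls" where "XI m = fls_shift (-m) 1"

lemma XI_mult: "XI a * XI b = (XI (a+b) :: 'a::field_char_0 fls)"
  unfolding XI_def using fls_X_intpow_times_fls_X_intpow[of a b] by simp

lemma XI_comm: "XI a * f = f * (XI a :: 'a::field_char_0 fls)"
  unfolding XI_def by (rule fls_X_intpow_times_comm)

lemma XI_0[simp]: "XI 0 = 1" unfolding XI_def by simp
lemma XI_1: "XI 1 = fls_X" unfolding XI_def by (simp add: fls_X_conv_shift_1)
lemma XI_m1: "XI (-1) = fls_X_inv" unfolding XI_def by (simp add: fls_X_inv_conv_shift_1)
lemma XI_pow: "fls_X ^ n = XI (int n)" unfolding XI_def by (simp add: fls_X_power_conv_shift_1)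

lemma XI_const_nth: "(fls_const s * XI m) $$ m = s"
  unfolding XI_def by (simp add: fls_shifted_times_simps(1)[symmetric])

lemma deriv_XI: "fls_deriv (XI q :: 'a::field_char_0 fls) = fls_const (of_int q) * XI (q - 1)"
  unfolding XI_def fls_deriv_shift by (simp add: fls_of_int)

lemma ffact_Suc: "ffact_int p (Suc j) = ffact_int p j * (of_int (p - int j) :: 'a::comm_ring_1)"
  unfolding ffact_int_def by simp

lemma derivs_XI: "(fls_deriv ^^ j) (XI q :: 'a::field_char_0 fls) = fls_const (ffact_int q j) * XI (q - int j)"
proof (induction j)
  case 0 then show ?case by (simp add: ffact_int_def)
next
  case (Suc j)
  have "(fls_deriv ^^ Suc j) (XI q :: 'a fls) = fls_deriv (fls_const (ffact_int q j) * XI (q - int j))"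
    using Suc by simp
  also have "\<dots> = fls_const (ffact_int q j) * (fls_const (of_int (q - int j)) * XI (q - int j - 1))"
    by (simp add: deriv_XI)
  also have "\<dots> = fls_const (ffact_int q (Suc j)) * XI (q - int (Suc j))"
    by (simp add: ffact_Suc algebra_simps)
  finally show ?case .
qed

lemma commute_XI:
  "(fls_deriv ^^ k) (XI p * h) = (\<Sum>j = 0..k. fls_const (of_nat (k choose j) * ffact_int p j) * XI (p - int j) * (fls_deriv ^^ (k - j)) (h :: 'a::field_char_0 fls))"
  unfolding fls_leibniz derivs_XI
  by (intro sum.cong refl) (simp add: fls_of_nat algebra_simps)

definition eval_nf :: "'a::field_char_0 nf \<Rightarrow> 'a fls \<Rightarrow> 'a fls" where
  "eval_nf L f = sum_list (map (\<lambda>((m,k),c). fls_const c * XI m * (fls_deriv ^^ k) f) L)"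

lemma eval_nf_Nil[simp]: "eval_nf [] f = 0" by (simp add: eval_nf_def)
lemma eval_nf_Cons[simp]: "eval_nf (((m,k),c) # L) f = fls_const c * XI m * (fls_deriv ^^ k) f + eval_nf L f"
  by (simp add: eval_nf_def)
lemma eval_nf_append[simp]: "eval_nf (A @ B) f = eval_nf A f + eval_nf B f"
  by (simp add: eval_nf_def)

lemma derivs_add[simp]: "(fls_deriv ^^ k) (f + g) = (fls_deriv ^^ k) f + (fls_deriv ^^ k) (g :: 'a::field_char_0 fls)"
  by (induction k) auto
lemma derivs_zero[simp]: "(fls_deriv ^^ k) (0 :: 'a::field_char_0 fls) = 0"
  by (induction k) auto
lemma derivs_cmult[simp]: "(fls_deriv ^^ k) (fls_const c * f) = fls_const c * (fls_deriv ^^ k) (f :: 'a::field_char_0 fls)"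
  by (induction k) auto

lemma single_term:
  "eval_nf (map (\<lambda>j. ((m + p - int j, k + l - j), c * d * of_nat (k choose j) * ffact_int p j)) [0..<Suc k]) f
   = fls_const c * XI m * (fls_deriv ^^ k) (fls_const d * XI p * (fls_deriv ^^ l) (f :: 'a::field_char_0 fls))"
proof -
  have "eval_nf (map (\<lambda>j. ((m + p - int j, k + l - j), c * d * of_nat (k choose j) * ffact_int p j)) [0..<Suc k]) f
     = (\<Sum>j\<in>{0..<Suc k}. fls_const (c * d * of_nat (k choose j) * ffact_int p j) * XI (m + p - int j) * (fls_deriv ^^ (k + l - j)) f)"
    unfolding eval_nf_def map_map interv_sum_list_conv_sum_set_nat set_upt by (simp only: o_def prod.case)
  also have "\<dots> = (\<Sum>j = 0..k. fls_const c * XI m * (fls_const d * (fls_const (of_nat (k choose j) * ffact_int p j) * XI (p - int j) * (fls_deriv ^^ (k - j)) ((fls_deriv ^^ l) f))))"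
  proof (intro sum.cong)
    fix j assume j: "j \<in> {0..k}"
    have d: "(fls_deriv ^^ (k - j)) ((fls_deriv ^^ l) f) = (fls_deriv ^^ (k + l - j)) f"
      proof -
      have "k + l - j = (k - j) + l" using j by simp
      then show ?thesis by (simp only: funpow_add o_apply)
    qed
    have x: "XI (m + p - int j) = XI m * (XI (p - int j) :: 'a fls)" by (simp add: XI_mult add_diff_eq)
    show "fls_const (c * d * of_nat (k choose j) * ffact_int p j) * XI (m + p - int j) * (fls_deriv ^^ (k + l - j)) f
       = fls_const c * XI m * (fls_const d * (fls_const (of_nat (k choose j) * ffact_int p j) * XI (p - int j) * (fls_deriv ^^ (k - j)) ((fls_deriv ^^ l) f)))"
      unfolding d x by (simp add: algebra_simps)
  qed auto
  also have "\<dots> = fls_const c * XI m * (fls_const d * (fls_deriv ^^ k) (XI p * (fls_deriv ^^ l) f))"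
    unfolding commute_XI by (simp add: sum_distrib_left)
  finally show ?thesis by (simp add: mult.assoc)
qed

lemma eval_nf_mult: "eval_nf (nf_mult L M) f = eval_nf L (eval_nf M (f :: 'a::field_char_0 fls))"
proof (induction L)
  case Nil then show ?case by (simp add: nf_mult_def)
next
  case (Cons x L)
  obtain m k c where x: "x = ((m,k),c)" by (metis prod.collapse)
  have "eval_nf (concat (map (\<lambda>((p,l),d). map (\<lambda>j. ((m + p - int j, k + l - j), c * d * of_nat (k choose j) * ffact_int p j)) [0..<Suc k]) M)) f
     = fls_const c * XI m * (fls_deriv ^^ k) (eval_nf M f)" (is "?A = _")
  proof (induction M)
    case Nil then show ?case by simp
  next
    case (Cons y M)
    obtain p l d where y: "y = ((p,l),d)" by (metis prod.collapse)
    show ?case unfolding y list.map concat.simps eval_nf_append prod.case single_term Cons.IH eval_nf_Cons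
      by (simp only: derivs_add distrib_left)
  qed
  note A = this
  have B: "nf_mult (((m,k),c) # L) M = concat (map (\<lambda>((p,l),d). map (\<lambda>j. ((m + p - int j, k + l - j), c * d * of_nat (k choose j) * ffact_int p j)) [0..<Suc k]) M) @ nf_mult L M"
    unfolding nf_mult_def by (simp only: list.map concat.simps prod.case)
  show ?case unfolding x B eval_nf_append A eval_nf_Cons Cons.IH ..
qed

lemma eval_letter: "eval_nf (letter_nf l) f = letter_op l (f :: 'a::field_char_0 fls)"
  by (cases l) (simp_all add: XI_1 XI_m1)

lemma eval_one: "eval_nf nf_one f = (f :: 'a::field_char_0 fls)"
  by (simp add: nf_one_def)

lemma word_nf_Cons: "word_nf (l # w) = nf_mult (letter_nf l) (word_nf w)"
  by (simp add: word_nf_def)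

lemma word_op_Cons: "word_op (l # w) f = letter_op l (word_op w f)"
  by (simp add: word_op_def)

lemma eval_word: "eval_nf (word_nf w) f = word_op w (f :: 'a::field_char_0 fls)"
proof (induction w arbitrary: f)
  case Nil then show ?case by (simp add: word_nf_def word_op_def eval_one)
next
  case (Cons l w) then show ?case by (simp add: word_nf_Cons word_op_Cons eval_nf_mult eval_letter)
qed

lemma eval_scale: "eval_nf (map (\<lambda>(mk,c). (mk, \<alpha> * c)) L) f = fls_const \<alpha> * eval_nf L (f :: 'a::field_char_0 fls)"
proof (induction L)
  case Nil then show ?case by simp
next
  case (Cons x L)
  obtain m k c where x: "x = ((m,k),c)" by (metis prod.collapse)
  show ?case using Cons by (simp add: x algebra_simps)
qed

lemma eval_lincomb: "eval_nf (lincomb_nf \<Omega>) f = lincomb_op \<Omega> (f :: 'a::field_char_0 fls)"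
proof (induction \<Omega>)
  case Nil then show ?case by (simp add: lincomb_nf_def lincomb_op_def)
next
  case (Cons x \<Omega>)
  obtain \<alpha> w where x: "x = (\<alpha>, w)" by (metis prod.collapse)
  show ?case using Cons by (simp add: x lincomb_nf_def lincomb_op_def eval_scale eval_word)
qed

lemma eval_pow: "(lincomb_op \<Omega> ^^ n) f = eval_nf (nf_pow (lincomb_nf \<Omega>) n) (f :: 'a::field_char_0 fls)"
proof (induction n arbitrary: f)
  case 0 then show ?case by (simp add: nf_pow_def eval_one)
next
  case (Suc n)
  have "nf_pow (lincomb_nf \<Omega>) (Suc n) = nf_mult (lincomb_nf \<Omega>) (nf_pow (lincomb_nf \<Omega>) n)"
    by (simp add: nf_pow_def)
  then show ?case using Suc by (simp add: eval_nf_mult eval_lincomb)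
qed

definition wt :: "int \<Rightarrow> 'a nf \<Rightarrow> bool" where
  "wt w L \<longleftrightarrow> (\<forall>x\<in>set L. fst (fst x) = int (snd (fst x)) + w)"

lemma wt_mem: "wt w L \<Longrightarrow> ((m,k),c) \<in> set L \<Longrightarrow> m = int k + w"
  by (force simp: wt_def)

lemma wt_mult: assumes "wt a L" "wt b M" shows "wt (a + b) (nf_mult L (M :: 'a::comm_ring_1 nf))"
  unfolding wt_def[of "a+b"] nf_mult_def
  by (auto split: prod.splits dest!: wt_mem[OF assms(1)] wt_mem[OF assms(2)])

lemma wt_one: "wt 0 (nf_one :: 'a::comm_ring_1 nf)" by (simp add: wt_def nf_one_def)

definition lw :: "letter \<Rightarrow> int" where "lw l = (if l = Cr then 1 else -1)"

lemma wt_letter: "wt (lw l) (letter_nf l :: 'a::comm_ring_1 nf)"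
  by (cases l) (simp_all add: wt_def lw_def)

lemma weight_Nil: "weight [] = 0" by (simp add: weight_def)
lemma weight_Cons: "weight (l # w) = lw l + weight w"
  by (cases l) (simp_all add: weight_def lw_def)

lemma wt_word: "wt (weight w) (word_nf w :: 'a::comm_ring_1 nf)"
proof (induction w)
  case Nil then show ?case by (simp add: word_nf_def weight_Nil wt_one)
next
  case (Cons l w) then show ?case
    by (simp add: word_nf_Cons weight_Cons wt_mult wt_letter)
qed

lemma wt_lincomb:
  assumes "\<forall>(\<alpha>, w) \<in> set \<Omega>. weight w = int e"
  shows "wt (int e) (lincomb_nf (\<Omega> :: 'a::comm_ring_1 lincomb))"
  unfolding wt_def[of "int e"] lincomb_nf_def
proof (clarsimp split: prod.splits)
  fix \<alpha> w m k c
  assume "(\<alpha>, w) \<in> set \<Omega>" and mem: "((m, k), c) \<in> set (word_nf w :: 'a nf)"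
  then have "weight w = int e" using assms by auto
  then show "m = int k + int e" using wt_mem[OF wt_word mem] by simp
qed

lemma wt_pow: "wt w L \<Longrightarrow> wt (int n * w) (nf_pow L n :: 'a::comm_ring_1 nf)"
proof (induction n)
  case 0 then show ?case by (simp add: nf_pow_def wt_one)
next
  case (Suc n)
  have "nf_pow L (Suc n) = nf_mult L (nf_pow L n)" by (simp add: nf_pow_def)
  moreover have "int (Suc n) * w = w + int n * w" by (simp add: algebra_simps)
  ultimately show ?case using Suc wt_mult by metis
qed

lemma nf_coeff_Nil[simp]: "nf_coeff [] m k = 0" by (simp add: nf_coeff_def)
lemma nf_coeff_Cons[simp]: "nf_coeff (((m0,k0),c) # L) m k = (if (m0,k0) = (m,k) then c else 0) + nf_coeff L m k"
  by (simp add: nf_coeff_def)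

lemma bound_exists: "\<exists>N. \<forall>x\<in>set (L :: 'a nf). snd (fst x) < N"
proof (induction L)
  case Nil then show ?case by simp
next
  case (Cons x L)
  then obtain N where "\<forall>x\<in>set L. snd (fst x) < N" by blast
  then show ?case by (intro exI[of _ "max N (Suc (snd (fst x)))"]) auto
qed

lemma nf_coeff_big: "\<forall>x\<in>set L. snd (fst x) < N \<Longrightarrow> N \<le> k \<Longrightarrow> nf_coeff L m k = 0"
proof (induction L)
  case Nil then show ?case by simp
next
  case (Cons x L)
  obtain m0 k0 c where x: "x = ((m0,k0),c)" by (metis prod.collapse)
  show ?case using Cons unfolding x by auto
qed

lemma group_eval:
  assumes "wt w L" "\<forall>x\<in>set L. snd (fst x) < N"
  shows "eval_nf L f = (\<Sum>k<N. fls_const (nf_coeff L (w + int k) k) * XI (w + int k) * (fls_deriv ^^ k) (f :: 'a::field_char_0 fls))"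
  using assms
proof (induction L)
  case Nil then show ?case by simp
next
  case (Cons x L)
  obtain m0 k0 c where x: "x = ((m0,k0),c)" by (metis prod.collapse)
  have m0: "m0 = int k0 + w" and k0: "k0 < N" using Cons.prems unfolding x wt_def by auto
  have IH: "eval_nf L f = (\<Sum>k<N. fls_const (nf_coeff L (w + int k) k) * XI (w + int k) * (fls_deriv ^^ k) f)"
    using Cons unfolding wt_def by auto
  have "(\<Sum>k<N. fls_const (nf_coeff (x # L) (w + int k) k) * XI (w + int k) * (fls_deriv ^^ k) f)
     = (\<Sum>k<N. (if k = k0 then fls_const c * XI m0 * (fls_deriv ^^ k0) f else 0))
       + (\<Sum>k<N. fls_const (nf_coeff L (w + int k) k) * XI (w + int k) * (fls_deriv ^^ k) f)"
    unfolding sum.distrib[symmetric] x nf_coeff_Cons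
    by (intro sum.cong refl) (auto simp: m0 fls_plus_const[symmetric] algebra_simps)
  also have "\<dots> = fls_const c * XI m0 * (fls_deriv ^^ k0) f + eval_nf L f"
    using k0 IH by simp
  finally show ?case unfolding x by simp
qed

lemma fls_const_sum: "fls_const (sum f A) = (\<Sum>i\<in>A. fls_const (f i) :: 'a::field_char_0 fls)"
proof (induction A rule: infinite_finite_induct)
  case (insert x F) then show ?case by (simp add: fls_plus_const[symmetric])
qed auto

lemma subst_lam_nth: "subst_lam h e $ m = fls_const (h $ m) * XI (int (m * e))"
  by (simp add: subst_lam_def XI_pow)

lemma int_split: "i \<le> n \<Longrightarrow> int (i * e) + int ((n - i) * e) = int (n * e)"
  by (metis add_mult_distrib le_add_diff_inverse of_nat_add)

lemma subst_lam_mult: "subst_lam (a * b) e = subst_lam a e * subst_lam (b :: 'a::field_char_0 fps) e"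
proof (rule fps_ext)
  fix n
  have "subst_lam (a * b) e $ n = (\<Sum>i = 0..n. fls_const (a $ i * b $ (n - i)) * XI (int (n * e)))"
    by (simp add: subst_lam_nth fps_mult_nth fls_const_sum sum_distrib_right)
  also have "\<dots> = (\<Sum>i = 0..n. fls_const (a $ i) * XI (int (i * e)) * (fls_const (b $ (n - i)) * XI (int ((n - i) * e))))"
  proof (intro sum.cong refl)
    fix i assume "i \<in> {0..n}"
    then have "XI (int (n * e)) = XI (int (i * e)) * (XI (int ((n - i) * e)) :: 'a fls)"
      by (metis XI_mult int_split atLeastAtMost_iff)
    then show "fls_const (a $ i * b $ (n - i)) * XI (int (n * e)) = fls_const (a $ i) * XI (int (i * e)) * (fls_const (b $ (n - i)) * XI (int ((n - i) * e)))"
      by (simp add: algebra_simps)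
  qed
  also have "\<dots> = (subst_lam a e * subst_lam b e) $ n"
    by (simp add: subst_lam_nth fps_mult_nth)
  finally show "subst_lam (a * b) e $ n = (subst_lam a e * subst_lam b e) $ n" .
qed

lemma subst_lam_one: "subst_lam (1 :: 'a::field_char_0 fps) e = 1"
  by (rule fps_ext) (simp add: subst_lam_def)

lemma subst_lam_pow: "subst_lam (h ^ k) e = subst_lam (h :: 'a::field_char_0 fps) e ^ k"
  by (induction k) (simp_all add: subst_lam_one subst_lam_mult)

definition tc :: "'a::field_char_0 fls \<Rightarrow> 'a fps \<Rightarrow> nat \<Rightarrow> nat \<Rightarrow> nat \<Rightarrow> 'a fls" where
  "tc f \<phi> e j k = fls_const ((\<phi> ^ k) $ j / fact k) * XI (int (j * e + k)) * (fls_deriv ^^ k) f"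

lemma taylor_nth0: "taylor_comp f \<phi> e $ j = (\<Sum>k\<le>j. tc f \<phi> e j k)"
proof -
  have pw: "(fps_const fls_X * subst_lam \<phi> e) ^ k $ j = XI (int k) * (fls_const ((\<phi> ^ k) $ j) * XI (int (j * e)))" for k
    by (simp add: power_mult_distrib fps_const_power subst_lam_pow[symmetric] subst_lam_nth XI_pow)
  show ?thesis unfolding taylor_comp_def tc_def fps_nth_Abs_fps
  proof (intro sum.cong refl)
    fix k assume "k \<in> {..j}"
    have e1: "XI (int (j*e+k)) = XI (int k) * (XI (int (j*e)) :: 'a fls)" by (simp add: XI_mult add.commute)
    have e2: "fls_const ((\<phi>^k)$j / fact k) = fls_const (inverse (fact k)) * fls_const ((\<phi>^k)$j)"
      by (simp add: divide_inverse mult.commute)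
    show "fls_const (inverse (fact k)) * (fls_deriv ^^ k) f * (fps_const fls_X * subst_lam \<phi> e) ^ k $ j =
         fls_const ((\<phi> ^ k) $ j / fact k) * XI (int (j * e + k)) * (fls_deriv ^^ k) f"
      unfolding e1 e2 pw by (simp only: mult.assoc mult.commute mult.left_commute)
  qed
qed

lemma tc_zero: "\<phi> $ 0 = 0 \<Longrightarrow> j < k \<Longrightarrow> tc f \<phi> e j k = 0"
  unfolding tc_def using startsby_zero_power_prefix[of \<phi> k] by simp

lemma taylor_nth: assumes "\<phi> $ 0 = 0" "j \<le> n"
  shows "taylor_comp f \<phi> e $ j = (\<Sum>k\<le>n. tc f \<phi> e j k)"
proof -
  have "\<forall>i\<in>{..n}-{..j}. tc f \<phi> e j i = 0" using tc_zero[OF assms(1)] by auto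
  then show ?thesis unfolding taylor_nth0 by (intro sum.mono_neutral_left) (use assms in auto)
qed

lemma R_form: assumes "\<phi> $ 0 = 0"
  shows "(subst_lam g e * taylor_comp f \<phi> e) $ n =
    (\<Sum>k\<le>n. fls_const ((g * \<phi> ^ k) $ n / fact k) * XI (int (n * e + k)) * (fls_deriv ^^ k) f)"
proof -
  have "(subst_lam g e * taylor_comp f \<phi> e) $ n =
     (\<Sum>i = 0..n. fls_const (g $ i) * XI (int (i * e)) * (\<Sum>k\<le>n. tc f \<phi> e (n - i) k))"
    unfolding fps_mult_nth subst_lam_nth
    by (intro sum.cong refl) (simp only: taylor_nth[OF assms, of "n - _" n] diff_le_self)
  also have "\<dots> = (\<Sum>i = 0..n. \<Sum>k\<le>n. fls_const (g $ i * (\<phi> ^ k) $ (n - i) / fact k) * XI (int (n * e + k)) * (fls_deriv ^^ k) f)"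
  proof (intro sum.cong refl)
    fix k i assume "i \<in> {0..n}"
    then have "int (i * e) + int ((n - i) * e + k) = int (n * e + k)"
      using int_split[of i n e] by simp
    then have hx: "XI (int (n * e + k)) = XI (int (i * e)) * (XI (int ((n - i) * e + k)) :: 'a fls)"
      by (simp only: XI_mult)
    have hc: "fls_const (g $ i * (\<phi> ^ k) $ (n - i) / fact k) = fls_const (g $ i) * fls_const ((\<phi> ^ k) $ (n - i) / fact k)"
      by (simp add: mult.assoc)
    show "fls_const (g $ i) * XI (int (i * e)) * (\<Sum>k\<le>n. tc f \<phi> e (n - i) k) = (\<Sum>k\<le>n. fls_const (g $ i * (\<phi> ^ k) $ (n - i) / fact k) * XI (int (n * e + k)) * (fls_deriv ^^ k) f)"
      unfolding sum_distrib_left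
    proof (intro sum.cong refl)
      fix k
      have "int (i * e) + int ((n - i) * e + k) = int (n * e + k)"
        using int_split[of i n e] \<open>i \<in> {0..n}\<close> by simp
      then have hx: "XI (int (n * e + k)) = XI (int (i * e)) * (XI (int ((n - i) * e + k)) :: 'a fls)"
        by (simp only: XI_mult)
      have hc: "fls_const (g $ i * (\<phi> ^ k) $ (n - i) / fact k) = fls_const (g $ i) * fls_const ((\<phi> ^ k) $ (n - i) / fact k)"
        by (simp add: mult.assoc)
      show "fls_const (g $ i) * XI (int (i * e)) * tc f \<phi> e (n - i) k = fls_const (g $ i * (\<phi> ^ k) $ (n - i) / fact k) * XI (int (n * e + k)) * (fls_deriv ^^ k) f"
        unfolding tc_def hc hx by (simp only: mult.assoc mult.commute mult.left_commute)
    qed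
  qed
  also have "\<dots> = (\<Sum>k\<le>n. \<Sum>i = 0..n. fls_const (g $ i * (\<phi> ^ k) $ (n - i) / fact k) * XI (int (n * e + k)) * (fls_deriv ^^ k) f)"
    by (rule sum.swap)
  also have "\<dots> = (\<Sum>k\<le>n. fls_const ((g * \<phi> ^ k) $ n / fact k) * XI (int (n * e + k)) * (fls_deriv ^^ k) f)"
    unfolding fps_mult_nth sum_divide_distrib fls_const_sum sum_distrib_right ..
  finally show ?thesis .
qed

lemma U_nth: "U_op \<Omega> f $ n = fls_const (inverse (fact n)) * (lincomb_op \<Omega> ^^ n) f"
  by (simp add: U_op_def)

lemma U_form:
  assumes "\<forall>(\<alpha>, w) \<in> set \<Omega>. weight w = int e"
  obtains N0 where "\<And>N f. N0 \<le> N \<Longrightarrow> U_op \<Omega> f $ n =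
      (\<Sum>k<N. fls_const (S_coeff \<Omega> e n k / fact n) * XI (int (n * e + k)) * (fls_deriv ^^ k) f)"
    and "\<And>k. N0 \<le> k \<Longrightarrow> S_coeff \<Omega> e n k = (0 :: 'a::field_char_0)"
proof -
  define P where "P = nf_pow (lincomb_nf \<Omega>) n"
  have wtP: "wt (int (n * e)) P"
    unfolding P_def using wt_pow[OF wt_lincomb[OF assms], of n] by simp
  obtain N0 where b: "\<forall>x\<in>set P. snd (fst x) < N0" using bound_exists by blast
  show ?thesis
  proof (rule that)
    fix N f assume N: "N0 \<le> N"
    have bN: "\<forall>x\<in>set P. snd (fst x) < N" using b N by auto
    have "U_op \<Omega> f $ n = fls_const (inverse (fact n)) *
       (\<Sum>k<N. fls_const (nf_coeff P (int (n * e) + int k) k) * XI (int (n * e) + int k) * (fls_deriv ^^ k) f)"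
      unfolding U_nth eval_pow P_def[symmetric] group_eval[OF wtP bN] ..
    also have "\<dots> = (\<Sum>k<N. fls_const (S_coeff \<Omega> e n k / fact n) * XI (int (n * e + k)) * (fls_deriv ^^ k) f)"
      unfolding sum_distrib_left
    proof (intro sum.cong refl)
      fix k
      have "S_coeff \<Omega> e n k = nf_coeff P (int (n * e) + int k) k"
        unfolding S_coeff_def P_def by simp
      then show "fls_const (inverse (fact n)) * (fls_const (nf_coeff P (int (n * e) + int k) k) * XI (int (n * e) + int k) * (fls_deriv ^^ k) f) =
         fls_const (S_coeff \<Omega> e n k / fact n) * XI (int (n * e + k)) * (fls_deriv ^^ k) f"
        by (simp add: divide_inverse mult.assoc mult.commute mult.left_commute)
    qed
    finally show "U_op \<Omega> f $ n = (\<Sum>k<N. fls_const (S_coeff \<Omega> e n k / fact n) * XI (int (n * e + k)) * (fls_deriv ^^ k) f)" .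
  next
    fix k assume "N0 \<le> k"
    then show "S_coeff \<Omega> e n k = 0"
      unfolding S_coeff_def P_def[symmetric] using nf_coeff_big[OF b] by simp
  qed
qed

lemma ff_zero: "j < k \<Longrightarrow> ffact_int (int j) k = (0 :: 'a::comm_ring_1)"
  unfolding ffact_int_def by (rule prod_zero) auto

lemma ff_nz: "ffact_int (int j) j \<noteq> (0 :: 'a::field_char_0)"
  unfolding ffact_int_def by (subst prod_zero_iff) auto

lemma fls_const_diff: "fls_const (a - b) = fls_const a - (fls_const b :: 'a::field_char_0 fls)"
  by (rule fls_eqI) simp

lemma coeff_unique:
  fixes a :: "nat \<Rightarrow> 'a::field_char_0"
  assumes h: "\<And>f. (\<Sum>k<N. fls_const (a k) * XI (int (m + k)) * (fls_deriv ^^ k) f) = 0"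
  shows "k < N \<Longrightarrow> a k = 0"
proof (induction k rule: less_induct)
  case (less k)
  have s: "(\<Sum>i<N. a i * ffact_int (int j) i) = 0" for j
  proof -
    have "(\<Sum>i<N. fls_const (a i) * XI (int (m + i)) * (fls_deriv ^^ i) (XI (int j))) =
          (\<Sum>i<N. fls_const (a i * ffact_int (int j) i) * XI (int m + int j))"
    proof (intro sum.cong refl)
      fix i
      have "XI (int (m + i)) * XI (int j - int i) = (XI (int m + int j) :: 'a fls)"
        by (simp add: XI_mult)
      then show "fls_const (a i) * XI (int (m + i)) * (fls_deriv ^^ i) (XI (int j)) = fls_const (a i * ffact_int (int j) i) * XI (int m + int j)"
        unfolding derivs_XI by (simp add: mult.assoc mult.commute mult.left_commute)
    qed
    also have "\<dots> = fls_const (\<Sum>i<N. a i * ffact_int (int j) i) * XI (int m + int j)"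
      by (simp add: fls_const_sum sum_distrib_right)
    finally have eq: "(\<Sum>i<N. fls_const (a i) * XI (int (m + i)) * (fls_deriv ^^ i) (XI (int j))) =
          fls_const (\<Sum>i<N. a i * ffact_int (int j) i) * XI (int m + int j)" .
    have z: "fls_const (\<Sum>i<N. a i * ffact_int (int j) i) * XI (int m + int j) = 0"
      by (metis eq h)
    have "(fls_const (\<Sum>i<N. a i * ffact_int (int j) i) * XI (int m + int j)) $$ (int m + int j) = 0"
      unfolding z by simp
    then show ?thesis unfolding XI_const_nth .
  qed
  have "(\<Sum>i<N. a i * ffact_int (int k) i) = a k * ffact_int (int k) k + (\<Sum>i\<in>{..<N} - {k}. a i * ffact_int (int k) i)"
    using less.prems by (subst sum.remove[of _ k]) auto
  also have "(\<Sum>i\<in>{..<N} - {k}. a i * ffact_int (int k) i) = 0"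
  proof (rule sum.neutral, rule ballI)
    fix i assume i: "i \<in> {..<N} - {k}"
    show "a i * ffact_int (int k) i = 0"
    proof (cases "i < k")
      case True then show ?thesis using less.IH[of i] i by auto
    next
      case False then have "k < i" using i by auto
      then show ?thesis by (simp add: ff_zero)
    qed
  qed
  finally have "a k * ffact_int (int k) k = 0" using s[of k] by simp
  then show ?case using ff_nz[of k, where 'a='a] by simp
qed

lemma gphi_zero: "\<phi> $ 0 = 0 \<Longrightarrow> n < k \<Longrightarrow> (g * \<phi> ^ k) $ n = (0 :: 'a::comm_ring_1)"
  unfolding fps_mult_nth
  by (rule sum.neutral) (use startsby_zero_power_prefix[of \<phi> k] in auto)

lemma per_n:
  fixes \<Omega> :: "'a::field_char_0 lincomb"
  assumes w: "\<forall>(\<alpha>, w) \<in> set \<Omega>. weight w = int e" and phi0: "\<phi> $ 0 = 0"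
  shows "(\<forall>k. S_coeff \<Omega> e n k / fact n = (g * \<phi> ^ k) $ n / fact k) \<longleftrightarrow>
         (\<forall>f. U_op \<Omega> f $ n = (subst_lam g e * taylor_comp f \<phi> e) $ n)"
proof -
  obtain N0 where U: "\<And>N f. N0 \<le> N \<Longrightarrow> U_op \<Omega> f $ n =
      (\<Sum>k<N. fls_const (S_coeff \<Omega> e n k / fact n) * XI (int (n * e + k)) * (fls_deriv ^^ k) f)"
    and Z: "\<And>k. N0 \<le> k \<Longrightarrow> S_coeff \<Omega> e n k = (0 :: 'a)"
    using U_form[OF w, where n=n] by blast
  define N where "N = max N0 (Suc n)"
  have UN: "U_op \<Omega> f $ n = (\<Sum>k<N. fls_const (S_coeff \<Omega> e n k / fact n) * XI (int (n * e + k)) * (fls_deriv ^^ k) f)" for f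
    using U[of N] unfolding N_def by simp
  have RN: "(subst_lam g e * taylor_comp f \<phi> e) $ n = (\<Sum>k<N. fls_const ((g * \<phi> ^ k) $ n / fact k) * XI (int (n * e + k)) * (fls_deriv ^^ k) f)" for f
  proof -
    have "\<forall>k\<in>{..<N} - {..n}. fls_const ((g * \<phi> ^ k) $ n / fact k) * XI (int (n * e + k)) * (fls_deriv ^^ k) f = 0"
      using gphi_zero[OF phi0, of n _ g] by auto
    moreover have "{..n} \<subseteq> {..<N}" unfolding N_def by auto
    ultimately show ?thesis unfolding R_form[OF phi0]
      by (intro sum.mono_neutral_left) auto
  qed
  show ?thesis
  proof
    assume "\<forall>k. S_coeff \<Omega> e n k / fact n = (g * \<phi> ^ k) $ n / fact k"
    then show "\<forall>f. U_op \<Omega> f $ n = (subst_lam g e * taylor_comp f \<phi> e) $ n"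
      unfolding UN RN by simp
  next
    assume h: "\<forall>f. U_op \<Omega> f $ n = (subst_lam g e * taylor_comp f \<phi> e) $ n"
    define a where "a k = S_coeff \<Omega> e n k / fact n - (g * \<phi> ^ k) $ n / fact k" for k
    have "(\<Sum>k<N. fls_const (a k) * XI (int (n * e + k)) * (fls_deriv ^^ k) f) = 0" for f
    proof -
      have "(\<Sum>k<N. fls_const (a k) * XI (int (n * e + k)) * (fls_deriv ^^ k) f) =
        (\<Sum>k<N. fls_const (S_coeff \<Omega> e n k / fact n) * XI (int (n * e + k)) * (fls_deriv ^^ k) f) -
        (\<Sum>k<N. fls_const ((g * \<phi> ^ k) $ n / fact k) * XI (int (n * e + k)) * (fls_deriv ^^ k) f)"
        unfolding sum_subtractf[symmetric] a_def fls_const_diff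
        by (intro sum.cong refl) (simp only: left_diff_distrib)
      also have "\<dots> = 0" using h[rule_format, of f] unfolding UN RN by simp
      finally show ?thesis .
    qed
    then have a0: "k < N \<Longrightarrow> a k = 0" for k
      using coeff_unique[where N=N and a=a and m="n * e"] by blast
    show "\<forall>k. S_coeff \<Omega> e n k / fact n = (g * \<phi> ^ k) $ n / fact k"
    proof
      fix k
      show "S_coeff \<Omega> e n k / fact n = (g * \<phi> ^ k) $ n / fact k"
      proof (cases "k < N")
        case True then show ?thesis using a0[of k] unfolding a_def by simp
      next
        case False then show ?thesis using Z[of k] gphi_zero[OF phi0, of n k] unfolding N_def by auto
      qed
    qed
  qed
qed

lemma egf_nth: "S_egf \<Omega> e $ k $ n = S_coeff \<Omega> e n k / fact n"
  by (simp add: S_egf_def)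

lemma rhs_nth: "(fps_const g * exp_y \<phi>) $ k $ n = (g * \<phi> ^ k) $ n / (fact k :: 'a::field_char_0)"
proof -
  have "(fps_const g * exp_y \<phi>) $ k = fps_const (inverse (fact k)) * (g * \<phi> ^ k)"
    unfolding exp_y_def fps_mult_left_const_nth fps_nth_Abs_fps by (simp only: mult.left_commute)
  then have "(fps_const g * exp_y \<phi>) $ k $ n = inverse (fact k) * (g * \<phi> ^ k) $ n"
    by (simp only: fps_mult_left_const_nth)
  then show ?thesis by (simp add: divide_inverse mult.commute)
qed

theorem mainTheorem2:
  fixes \<Omega> :: "'a::field_char_0 lincomb" and e :: nat and g \<phi> :: "'a fps"
  assumes words: "\<forall>(\<alpha>, w) \<in> set \<Omega>. num_An w = 1 \<and> weight w = int e"
    and phi0: "\<phi> $ 0 = 0"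
  shows "S_egf \<Omega> e = fps_const g * exp_y \<phi>
     \<longleftrightarrow> (\<forall>f. U_op \<Omega> f = subst_lam g e * taylor_comp f \<phi> e)"
proof -
  have w: "\<forall>(\<alpha>, w) \<in> set \<Omega>. weight w = int e" using words by auto
  have "S_egf \<Omega> e = fps_const g * exp_y \<phi> \<longleftrightarrow>
        (\<forall>n k. S_coeff \<Omega> e n k / fact n = (g * \<phi> ^ k) $ n / fact k)"
    unfolding fps_eq_iff egf_nth rhs_nth by blast
  also have "\<dots> \<longleftrightarrow> (\<forall>n f. U_op \<Omega> f $ n = (subst_lam g e * taylor_comp f \<phi> e) $ n)"
    using per_n[OF w phi0] by blast
  also have "\<dots> \<longleftrightarrow> (\<forall>f. U_op \<Omega> f = subst_lam g e * taylor_comp f \<phi> e)"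
    by (auto simp: fps_eq_iff)
  finally show ?thesis .
qed

end
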